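(* Let $g\colon\mathbb X\to\mathbb Y$ be twice continuously differentiable, $D\subset\mathbb Y$ closed, $\Phi(x):=g(x)-D$, $(\bar x,0)\in\operatorname{gph}\Phi$ and $u\in\mathbb S_{\mathbb X}$. Assume (A) if $\nabla g(\bar x)^*y^*=0$, $\nabla^2\langle y^*,g\rangle(\bar x)(u)+\nabla g(\bar x)^*z^*=0$, $y^*\in\mathcal N_D(g(\bar x);\nabla g(\bar x)u)$, $z^*\in D\mathcal N_D(g(\bar x),y^* )(\nabla g(\bar x)u)$, then $y^*=0$; and assume (B1) or, in case $\nabla g(\bar x)u\ne0$, (B2), where (B1) if $\nabla g(\bar x)^*y^*=0$, $\nabla g(\bar x)^*\hat z^*=0$, $y^*\in\mathcal N_D(g(\bar x);\nabla g(\bar x)u)$, $\hat z^*\in D\mathcal N_D(g(\bar x),y^* )(0)$, then $\hat z^*=0$; (B2) if $\nabla g(\bar x)^*y^*=0$, $\nabla g(\bar x)^*\hat z^*=0$, $y^*\in\mathcal N_D(g(\bar x);\nabla g(\bar x)u)$, then $\hat z^*\notin D_{\mathrm{sub}}\mathcal N_D(g(\bar x),y^* )(\nabla g(\bar x)u/\|\nabla g(\bar x)u\|)$. Consider the system (S): $x^*=\nabla^2\langle y^*,g\rangle(\bar x)(u)+\nabla g(\bar x)^*z^*$, $y^*\in\mathcal N_D(g(\bar x);\nabla g(\bar x)u)\cap\ker\nabla g(\bar x)^*$, $z^*\in D\mathcal N_D(g(\bar x),y^* )(\nabla g(\bar x)u)$. (i) If for every $x^*\in\mathbb X$, $y^*,z^*\in\mathbb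 Y$ satisfying (S) there is $\lambda\in\mathcal N_D(g(\bar x))$ with $x^*=\nabla g(\bar x)^*\lambda$, then $\Phi$ is asymptotically regular at $(\bar x,0)$ in direction $u$. (ii) If for every $x^*,y^*,z^*$ satisfying (S) there is $\lambda\in\mathcal N_D(g(\bar x);\nabla g(\bar x)u)$ with $x^*=\nabla g(\bar x)^*\lambda$, then $\Phi$ is strongly asymptotically regular at $(\bar x,0)$ in direction $u$.
   Context: $\nabla g(\bar x)^*$ adjoint of derivative; $\nabla^2\langle y^*,g\rangle(\bar x)$ Hessian of $x\mapsto\langle y^*,g(x)\rangle$, applied to $u$. $\mathcal N_D(y)$ limiting normal cone; $\mathcal N_D(y;w)$ directional limiting normal cone (limits of $\eta_k\in\widehat{\mathcal N}_D(y+t_kw_k)$, $w_k\to w$, $t_k\searrow0$). $\mathcal N_D$ viewed as set-valued map $y\mapsto\mathcal N_D(y)$; $D\mathcal N_D(y,y^* )$ its graphical derivative: $z^*\in D\mathcal N_D(y,y^* )(q)$ iff $(q,z^* )$ lies in the Bouligand tangent cone to $\operatorname{gph}\mathcal N_D$ at $(y,y^* )$. Graphical subderivative of a map $\Psi$ at $(a,b)\in\operatorname{gph}\Psi$: $D_{\mathrm{sub}}\Psi(a,b)(q)$, $q$ a unit vector, is the set of unit vectors $w$ for which there are $q_k\to q$, $w_k\to w$, $t_k\searrow0$, $\tau_k\searrow0$, $\tau_k/t_k\to\infty$ with $(a+t_kq_k,b+\tau_kw_k)\in\operatorname{gph}\Psi$. (Strong) asymptotic regularity in direction $u$ at $(\bar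 x,\bar y)$: for all $\{(x_k,y_k)\}\subset\operatorname{gph}\Phi$, $\{x_k^*\}$, $\{\lambda_k\}$, $x^*,y^*$ with $x_k\notin\Phi^{-1}(\bar y)$, $y_k\ne\bar y$, $x_k^*\in\widehat D^*\Phi(x_k,y_k)(\lambda_k)$ (regular coderivative), $x_k\to\bar x$, $y_k\to\bar y$, $x_k^*\to x^*$, $(x_k-\bar x)/\|x_k-\bar x\|\to u$, $(y_k-\bar y)/\|x_k-\bar x\|\to0$, $\|\lambda_k\|\to\infty$, $(y_k-\bar y)/\|y_k-\bar y\|-\lambda_k/\|\lambda_k\|\to0$, $(\|y_k-\bar y\|/\|x_k-\bar x\|)\lambda_k\to y^*$, one has $x^*\in\operatorname{Im}D^*\Phi(\bar x,\bar y)$ (resp. $x^*\in\operatorname{Im}D^*\Phi((\bar x,\bar y);(u,0))$, the directional limiting coderivative, for strong), where $\operatorname{Im}\Psi=\bigcup_z\Psi(z)$. *)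

theory Defs
  imports "HOL-Analysis.Analysis"
begin

definition rnormal :: "'a::euclidean_space set \<Rightarrow> 'a \<Rightarrow> 'a set" where
  "rnormal A x = {v. x \<in> A \<and> (\<forall>e>0. \<exists>d>0. \<forall>y\<in>A. dist y x < d \<longrightarrow> inner v (y - x) \<le> e * norm (y - x))}"

definition lnormal :: "'a::euclidean_space set \<Rightarrow> 'a \<Rightarrow> 'a set" where
  "lnormal A x = {v. \<exists>xs vs. (\<forall>k. vs k \<in> rnormal A (xs k)) \<and> xs \<longlonglongrightarrow> x \<and> vs \<longlonglongrightarrow> v}"

definition dnormal :: "'a::euclidean_space set \<Rightarrow> 'a \<Rightarrow> 'a \<Rightarrow> 'a set" where
  "dnormal A x w = {v. \<exists>ts ws vs. (\<forall>k. ts k > 0) \<and> ts \<longlonglongrightarrow> 0 \<and> ws \<longlonglongrightarrow> w \<and>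
      (\<forall>k. vs k \<in> rnormal A (x + ts k *\<^sub>R ws k)) \<and> vs \<longlonglongrightarrow> v}"

definition tcone :: "'a::euclidean_space set \<Rightarrow> 'a \<Rightarrow> 'a set" where
  "tcone A z = {w. \<exists>ts ws. (\<forall>k. ts k > 0) \<and> ts \<longlonglongrightarrow> 0 \<and> ws \<longlonglongrightarrow> w \<and> (\<forall>k. z + ts k *\<^sub>R ws k \<in> A)}"

definition gph_normal :: "'a::euclidean_space set \<Rightarrow> ('a \<times> 'a) set" where
  "gph_normal D = {(y, ys). ys \<in> lnormal D y}"

definition gderiv_normal :: "'a::euclidean_space set \<Rightarrow> 'a \<Rightarrow> 'a \<Rightarrow> 'a \<Rightarrow> 'a set" where
  "gderiv_normal D y ys q = {zs. (q, zs) \<in> tcone (gph_normal D) (y, ys)}"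

definition gsubderiv :: "('a::euclidean_space \<times> 'b::euclidean_space) set \<Rightarrow> 'a \<Rightarrow> 'b \<Rightarrow> 'a \<Rightarrow> 'b set" where
  "gsubderiv G a b q = {w. norm w = 1 \<and> (\<exists>qs ws ts taus.
      qs \<longlonglongrightarrow> q \<and> ws \<longlonglongrightarrow> w \<and> (\<forall>k. ts k > 0) \<and> ts \<longlonglongrightarrow> 0 \<and>
      (\<forall>k. taus k > 0) \<and> taus \<longlonglongrightarrow> 0 \<and> filterlim (\<lambda>k. taus k / ts k) at_top sequentially \<and>
      (\<forall>k. (a + ts k *\<^sub>R qs k, b + taus k *\<^sub>R ws k) \<in> G))}"

definition rcoderiv :: "('a::euclidean_space \<times> 'b::euclidean_space) set \<Rightarrow> 'a \<Rightarrow> 'b \<Rightarrow> 'b \<Rightarrow> 'a set" where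
  "rcoderiv G x y lam = {xs. (xs, - lam) \<in> rnormal G (x, y)}"

definition lcoderiv :: "('a::euclidean_space \<times> 'b::euclidean_space) set \<Rightarrow> 'a \<Rightarrow> 'b \<Rightarrow> 'b \<Rightarrow> 'a set" where
  "lcoderiv G x y lam = {xs. (xs, - lam) \<in> lnormal G (x, y)}"

definition dcoderiv :: "('a::euclidean_space \<times> 'b::euclidean_space) set \<Rightarrow> 'a \<Rightarrow> 'b \<Rightarrow> 'a \<Rightarrow> 'b \<Rightarrow> 'b \<Rightarrow> 'a set" where
  "dcoderiv G x y u v lam = {xs. (xs, - lam) \<in> dnormal G (x, y) (u, v)}"

definition asymp_reg_gen :: "('a::euclidean_space \<times> 'b::euclidean_space) set \<Rightarrow> 'a \<Rightarrow> 'b \<Rightarrow> 'a \<Rightarrow> 'a set \<Rightarrow> bool" where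
  "asymp_reg_gen G xb yb u C \<longleftrightarrow>
    (\<forall>(xk::nat \<Rightarrow> 'a) (yk::nat \<Rightarrow> 'b) (xsk::nat \<Rightarrow> 'a) (lam::nat \<Rightarrow> 'b) xs ys.
       (\<forall>k. (xk k, yk k) \<in> G) \<and> (\<forall>k. (xk k, yb) \<notin> G) \<and> (\<forall>k. yk k \<noteq> yb) \<and>
       (\<forall>k. xsk k \<in> rcoderiv G (xk k) (yk k) (lam k)) \<and>
       xk \<longlonglongrightarrow> xb \<and> yk \<longlonglongrightarrow> yb \<and> xsk \<longlonglongrightarrow> xs \<and>
       (\<lambda>k. (1 / norm (xk k - xb)) *\<^sub>R (xk k - xb)) \<longlonglongrightarrow> u \<and>
       (\<lambda>k. (1 / norm (xk k - xb)) *\<^sub>R (yk k - yb)) \<longlonglongrightarrow> 0 \<and>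
       filterlim (\<lambda>k. norm (lam k)) at_top sequentially \<and>
       (\<lambda>k. (1 / norm (yk k - yb)) *\<^sub>R (yk k - yb) - (1 / norm (lam k)) *\<^sub>R lam k) \<longlonglongrightarrow> 0 \<and>
       (\<lambda>k. (norm (yk k - yb) / norm (xk k - xb)) *\<^sub>R lam k) \<longlonglongrightarrow> ys
     \<longrightarrow> xs \<in> C)"

definition asymp_regular :: "('a::euclidean_space \<times> 'b::euclidean_space) set \<Rightarrow> 'a \<Rightarrow> 'b \<Rightarrow> 'a \<Rightarrow> bool" where
  "asymp_regular G xb yb u \<longleftrightarrow> asymp_reg_gen G xb yb u (\<Union>lam. lcoderiv G xb yb lam)"

definition strong_asymp_regular :: "('a::euclidean_space \<times> 'b::euclidean_space) set \<Rightarrow> 'a \<Rightarrow> 'b \<Rightarrow> 'a \<Rightarrow> bool" where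
  "strong_asymp_regular G xb yb u \<longleftrightarrow> asymp_reg_gen G xb yb u (\<Union>lam. dcoderiv G xb yb u 0 lam)"

end

theory Submission
  imports Defs
begin

lemma adj_repr:
  fixes f :: "'n::euclidean_space \<Rightarrow> 'm::euclidean_space"
  assumes "linear f"
  shows "adjoint f y = (\<Sum>i\<in>Basis. (f i \<bullet> y) *\<^sub>R i)"
proof -
  have "adjoint f y = (\<Sum>i\<in>Basis. (adjoint f y \<bullet> i) *\<^sub>R i)"
    by (simp add: euclidean_representation)
  also have "\<dots> = (\<Sum>i\<in>Basis. (f i \<bullet> y) *\<^sub>R i)"
    using adjoint_works[OF assms] by (simp add: inner_commute)
  finally show ?thesis .
qed

lemma rnormal_in: "v \<in> rnormal A x \<Longrightarrow> x \<in> A"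
  by (simp add: rnormal_def)

lemma rnormal_scale:
  assumes "v \<in> rnormal A x" "c \<ge> 0"
  shows "c *\<^sub>R v \<in> rnormal A x"
proof -
  have xA: "x \<in> A" using assms by (simp add: rnormal_def)
  show ?thesis unfolding rnormal_def
  proof (intro CollectI conjI xA allI impI)
    fix e :: real assume e: "e > 0"
    show "\<exists>d>0. \<forall>y\<in>A. dist y x < d \<longrightarrow> inner (c *\<^sub>R v) (y - x) \<le> e * norm (y - x)"
    proof (cases "c = 0")
      case True then show ?thesis using e by (auto intro: exI[of _ 1])
    next
      case False
      with assms have cp: "c > 0" by simp
      have ec: "e/c > 0" using e cp by simp
      from assms(1) have "\<forall>e>0. \<exists>d>0. \<forall>y\<in>A. dist y x < d \<longrightarrow> inner v (y - x) \<le> e * norm (y - x)"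
        unfolding rnormal_def by blast
      from this[rule_format, OF ec] obtain d where d: "d > 0" "\<forall>y\<in>A. dist y x < d \<longrightarrow> inner v (y - x) \<le> (e/c) * norm (y - x)"
        by blast
      show ?thesis
      proof (intro exI[of _ d] conjI d(1) ballI impI)
        fix y assume "y \<in> A" "dist y x < d"
        with d have "inner v (y - x) \<le> (e/c) * norm (y - x)" by blast
        then have "c * inner v (y - x) \<le> c * ((e/c) * norm (y - x))" using cp by (intro mult_left_mono) auto
        also have "c * ((e/c) * norm (y - x)) = e * norm (y - x)" using cp by simp
        finally show "inner (c *\<^sub>R v) (y - x) \<le> e * norm (y - x)" by simp
      qed
    qed
  qed
qed

lemma rnormal_lnormal: "v \<in> rnormal A x \<Longrightarrow> v \<in> lnormal A x"
  unfolding lnormal_def by (rule CollectI, rule exI[of _ "\<lambda>k. x"], rule exI[of _ "\<lambda>k. v"]) auto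

lemma unbounded_subseq:
  fixes f :: "nat \<Rightarrow> 'a::real_normed_vector"
  assumes "\<not> bounded (range f)"
  shows "\<exists>r. strict_mono r \<and> (\<forall>n. norm (f (r n)) > real n)"
proof -
  have big: "\<exists>k>N. norm (f k) > M" for N M
  proof (rule ccontr)
    assume "\<not> ?thesis"
    then have "\<forall>k>N. norm (f k) \<le> M" by auto
    then have "\<forall>k. norm (f k) \<le> max M (Max (norm ` f ` {..N}))"
      by (metis atMost_iff finite_atMost finite_imageI Max_ge imageI le_max_iff_disj not_le)
    then show False using assms by (auto simp: bounded_iff)
  qed
  have "\<exists>r. \<forall>n. norm (f (r n)) > real n \<and> r n < r (Suc n)"
    apply (rule dependent_nat_choice[where P="\<lambda>n k. norm (f k) > real n" and Q="\<lambda>n k k'. k < k'"])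
    subgoal using big[of 0 0] by auto
    subgoal for x n using big[of x "real (Suc n)"] by auto
    done
  then show ?thesis by (auto simp: strict_mono_Suc_iff)
qed

lemma deriv_seq:
  fixes f :: "'a::real_normed_vector \<Rightarrow> 'b::real_normed_vector"
  assumes df: "(f has_derivative f') (at x)"
    and xk: "xk \<longlonglongrightarrow> x" and ne: "\<And>k. xk k \<noteq> x"
    and dir: "(\<lambda>k. (1 / norm (xk k - x)) *\<^sub>R (xk k - x)) \<longlonglongrightarrow> u"
  shows "(\<lambda>k. (1 / norm (xk k - x)) *\<^sub>R (f (xk k) - f x)) \<longlonglongrightarrow> f' u"
proof -
  have bl: "bounded_linear f'" using df by (simp add: has_derivative_at)
  have lim0: "((\<lambda>h. norm (f (x + h) - f x - f' h) / norm h) \<longlongrightarrow> 0) (at 0)"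
    using df by (simp add: has_derivative_at)
  have hk: "filterlim (\<lambda>k. xk k - x) (at 0) sequentially"
    using xk ne by (auto simp: filterlim_at intro!: LIM_zero)
  have "(\<lambda>k. norm (f (x + (xk k - x)) - f x - f' (xk k - x)) / norm (xk k - x)) \<longlonglongrightarrow> 0"
    using filterlim_compose[OF lim0 hk] by (simp add: o_def)
  note n0 = this
  have a: "(\<lambda>k. (1 / norm (xk k - x)) *\<^sub>R (f (xk k) - f x - f' (xk k - x))) \<longlonglongrightarrow> 0"
    apply (rule tendsto_norm_zero_cancel)
    using n0 by (simp add: divide_inverse mult.commute)
  have b: "(\<lambda>k. f' ((1 / norm (xk k - x)) *\<^sub>R (xk k - x))) \<longlonglongrightarrow> f' u"
    using bounded_linear.tendsto[OF bl dir] .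
  have lim: "(\<lambda>k. (1 / norm (xk k - x)) *\<^sub>R (f (xk k) - f x - f' (xk k - x)) + f' ((1 / norm (xk k - x)) *\<^sub>R (xk k - x))) \<longlonglongrightarrow> 0 + f' u"
    by (rule tendsto_add[OF a b])
  have eq: "(1 / norm (xk k - x)) *\<^sub>R (f (xk k) - f x - f' (xk k - x)) + f' ((1 / norm (xk k - x)) *\<^sub>R (xk k - x)) = (1 / norm (xk k - x)) *\<^sub>R (f (xk k) - f x)" for k
  proof -
    have e: "f' ((1 / norm (xk k - x)) *\<^sub>R (xk k - x)) = (1 / norm (xk k - x)) *\<^sub>R f' (xk k - x)"
      by (rule linear_scale[OF bounded_linear.linear[OF bl]])
    show ?thesis unfolding e by (simp only: scaleR_diff_right diff_add_cancel)
  qed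
  have eqf: "(\<lambda>k. (1 / norm (xk k - x)) *\<^sub>R (f (xk k) - f x - f' (xk k - x)) + f' ((1 / norm (xk k - x)) *\<^sub>R (xk k - x))) = (\<lambda>k. (1 / norm (xk k - x)) *\<^sub>R (f (xk k) - f x))"
    using eq by (rule ext)
  show ?thesis using lim unfolding eqf add.left_neutral .
qed

lemma core:
  fixes L :: "'b::euclidean_space \<Rightarrow> 'a::euclidean_space" and D :: "'b set"
    and t :: "nat \<Rightarrow> real" and d nu :: "nat \<Rightarrow> 'b"
  assumes lin: "linear L"
    and B: "(\<forall>ys zh. L ys = 0 \<and> L zh = 0 \<and> ys \<in> dnormal D gb w \<and> zh \<in> gderiv_normal D gb ys 0 \<longrightarrow> zh = 0)
          \<or> (w \<noteq> 0 \<and> (\<forall>ys zh. L ys = 0 \<and> L zh = 0 \<and> ys \<in> dnormal D gb w \<longrightarrow>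
               zh \<notin> gsubderiv (gph_normal D) gb ys ((1 / norm w) *\<^sub>R w)))"
    and tpos: "\<And>k. t k > 0" and t0: "t \<longlonglongrightarrow> 0"
    and dw: "(\<lambda>k. (1 / t k) *\<^sub>R (d k - gb)) \<longlonglongrightarrow> w"
    and nu: "\<And>k. nu k \<in> rnormal D (d k)" and nuy: "nu \<longlonglongrightarrow> yb"
    and La: "(\<lambda>k. (1 / t k) *\<^sub>R L (nu k)) \<longlonglongrightarrow> a"
  shows "yb \<in> dnormal D gb w \<and> L yb = 0 \<and> (\<exists>z. z \<in> gderiv_normal D gb yb w \<and> L z = a)"
proof -
  have bl: "bounded_linear L" using lin by (simp add: linear_conv_bounded_linear)
  have tne: "t k \<noteq> 0" for k using tpos[of k] by simp
  have dpt: "gb + t k *\<^sub>R ((1 / t k) *\<^sub>R (d k - gb)) = d k" for k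
    using tpos[of k] by simp
  have dn: "yb \<in> dnormal D gb w"
    unfolding dnormal_def
    by (rule CollectI, rule exI[of _ t], rule exI[of _ "\<lambda>k. (1 / t k) *\<^sub>R (d k - gb)"], rule exI[of _ nu])
       (simp add: dpt tpos tne t0 dw nu nuy)
  have "(\<lambda>k. L (nu k)) \<longlonglongrightarrow> L yb" by (rule bounded_linear.tendsto[OF bl nuy])
  moreover have "(\<lambda>k. L (nu k)) \<longlonglongrightarrow> 0"
  proof -
    have "(\<lambda>k. t k *\<^sub>R ((1 / t k) *\<^sub>R L (nu k))) \<longlonglongrightarrow> 0 *\<^sub>R a"
      by (rule tendsto_scaleR[OF t0 La])
    moreover have "t k *\<^sub>R ((1 / t k) *\<^sub>R L (nu k)) = L (nu k)" for k using tpos[of k] by simp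
    ultimately show ?thesis by simp
  qed
  ultimately have Ly0: "L yb = 0" by (rule LIMSEQ_unique)
  define zeta where "zeta k = (1 / t k) *\<^sub>R (nu k - yb)" for k
  have Lzeta_eq: "L (zeta k) = (1 / t k) *\<^sub>R L (nu k)" for k
    unfolding zeta_def using Ly0 by (simp add: linear_scale[OF lin] linear_diff[OF lin])
  have Lzeta: "(\<lambda>k. L (zeta k)) \<longlonglongrightarrow> a" unfolding Lzeta_eq by (rule La)
  have gph: "(d k, nu k) \<in> gph_normal D" for k
    unfolding gph_normal_def using rnormal_lnormal[OF nu[of k]] by simp
  have nupt: "yb + t k *\<^sub>R zeta k = nu k" for k
    unfolding zeta_def using tpos[of k] by simp
  have bdd: "bounded (range zeta)"
  proof (rule ccontr)
    assume nb: "\<not> bounded (range zeta)"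
    obtain r where r: "strict_mono r" "\<And>n. norm (zeta (r n)) > real n"
      using unbounded_subseq[OF nb] by blast
    have zpos: "norm (zeta (r n)) > 0" for n using r(2)[of n] by linarith
    define zeta' where "zeta' n = (1 / norm (zeta (r n))) *\<^sub>R zeta (r n)" for n
    have nz': "norm (zeta' n) = 1" for n
      unfolding zeta'_def using zpos[of n] by simp
    have "bounded (range zeta')"
      unfolding bounded_iff using nz' by auto
    then obtain zh r2 where r2: "strict_mono r2" "(zeta' \<circ> r2) \<longlonglongrightarrow> zh"
      using bounded_imp_convergent_subsequence by blast
    have "(\<lambda>n. norm ((zeta' \<circ> r2) n)) \<longlonglongrightarrow> norm zh" by (rule tendsto_norm[OF r2(2)])
    then have nzh: "norm zh = 1" using nz' by (simp add: o_def LIMSEQ_const_iff)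
    define s where "s = r \<circ> r2"
    have s: "strict_mono s" unfolding s_def using r(1) r2(1) by (rule strict_mono_o)
    have inf: "filterlim (\<lambda>n. norm (zeta (s n))) at_top sequentially"
    proof (rule filterlim_at_top_mono[OF filterlim_real_sequentially])
      show "\<forall>\<^sub>F n in sequentially. real n \<le> norm (zeta (s n))"
      proof (rule always_eventually, rule allI)
        fix n
        have "real n \<le> real (r2 n)" using seq_suble[OF r2(1), of n] by simp
        also have "\<dots> < norm (zeta (s n))" unfolding s_def using r(2)[of "r2 n"] by simp
        finally show "real n \<le> norm (zeta (s n))" by simp
      qed
    qed
    have inv0: "(\<lambda>n. 1 / norm (zeta (s n))) \<longlonglongrightarrow> 0"
      using tendsto_inverse_0_at_top[OF inf] by (simp add: divide_inverse)
    have zr2: "zeta' (r2 n) = (1 / norm (zeta (s n))) *\<^sub>R zeta (s n)" for n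
      unfolding zeta'_def s_def by simp
    have Lzh: "L zh = 0"
    proof -
      have "(\<lambda>n. L ((zeta' \<circ> r2) n)) \<longlonglongrightarrow> L zh" by (rule bounded_linear.tendsto[OF bl r2(2)])
      moreover have "(\<lambda>n. (1 / norm (zeta (s n))) *\<^sub>R L (zeta (s n))) \<longlonglongrightarrow> 0 *\<^sub>R a"
        by (rule tendsto_scaleR[OF inv0 LIMSEQ_subseq_LIMSEQ[OF Lzeta s, unfolded o_def]])
      moreover have "L ((zeta' \<circ> r2) n) = (1 / norm (zeta (s n))) *\<^sub>R L (zeta (s n))" for n
        by (simp add: zr2 linear_scale[OF lin])
      ultimately show ?thesis by (simp add: LIMSEQ_unique)
    qed
    have nus: "(nu \<circ> s) \<longlonglongrightarrow> yb" by (rule LIMSEQ_subseq_LIMSEQ[OF nuy s])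
    have ts_pos: "t (s n) * norm (zeta (s n)) > 0" for n
      using tpos[of "s n"] zpos[of "r2 n"] by (simp add: s_def)
    have ts_eq: "t (s n) * norm (zeta (s n)) = norm (nu (s n) - yb)" for n
      unfolding zeta_def using tpos[of "s n"] by simp
    have ts0: "(\<lambda>n. t (s n) * norm (zeta (s n))) \<longlonglongrightarrow> 0"
      unfolding ts_eq using tendsto_norm[OF LIM_zero[OF nus]] by (simp add: o_def)
    have nupt2: "yb + (t (s n) * norm (zeta (s n))) *\<^sub>R zeta' (r2 n) = nu (s n)" for n
      using zpos[of "r2 n"] nupt[of "s n"] by (simp add: zr2 s_def)
    have dws: "(\<lambda>n. (1 / t (s n)) *\<^sub>R (d (s n) - gb)) \<longlonglongrightarrow> w"
      using LIMSEQ_subseq_LIMSEQ[OF dw s] by (simp add: o_def)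
    show False
      using B
    proof
      assume B1: "\<forall>ys zh. L ys = 0 \<and> L zh = 0 \<and> ys \<in> dnormal D gb w \<and> zh \<in> gderiv_normal D gb ys 0 \<longrightarrow> zh = 0"
      have "zh \<in> gderiv_normal D gb yb 0"
        unfolding gderiv_normal_def tcone_def
      proof (intro CollectI exI conjI allI)
        let ?ts = "\<lambda>n. t (s n) * norm (zeta (s n))"
        let ?ws = "\<lambda>n. ((1 / norm (zeta (s n))) *\<^sub>R ((1 / t (s n)) *\<^sub>R (d (s n) - gb)), zeta' (r2 n))"
        show "?ts n > 0" for n by (rule ts_pos)
        show "?ts \<longlonglongrightarrow> 0" by (rule ts0)
        have "(\<lambda>n. (1 / norm (zeta (s n))) *\<^sub>R ((1 / t (s n)) *\<^sub>R (d (s n) - gb))) \<longlonglongrightarrow> 0 *\<^sub>R w"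
          by (rule tendsto_scaleR[OF inv0 dws])
        then show "?ws \<longlonglongrightarrow> (0, zh)"
          using r2(2) by (auto intro!: tendsto_Pair simp: o_def)
        show "(gb, yb) + ?ts n *\<^sub>R ?ws n \<in> gph_normal D" for n
          using gph[of "s n"] nupt2[of n] tpos[of "s n"] zpos[of "r2 n"]
          by (simp add: s_def)
      qed
      then have "zh = 0" using B1 Ly0 Lzh dn by blast
      then show False using nzh by simp
    next
      assume B2: "w \<noteq> 0 \<and> (\<forall>ys zh. L ys = 0 \<and> L zh = 0 \<and> ys \<in> dnormal D gb w \<longrightarrow>
               zh \<notin> gsubderiv (gph_normal D) gb ys ((1 / norm w) *\<^sub>R w))"
      have wpos: "norm w > 0" using B2 by simp
      have "zh \<in> gsubderiv (gph_normal D) gb yb ((1 / norm w) *\<^sub>R w)"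
        unfolding gsubderiv_def
      proof (intro CollectI exI conjI allI nzh)
        let ?qs = "\<lambda>n. (1 / norm w) *\<^sub>R ((1 / t (s n)) *\<^sub>R (d (s n) - gb))"
        let ?ts = "\<lambda>n. t (s n) * norm w"
        let ?taus = "\<lambda>n. t (s n) * norm (zeta (s n))"
        show "?qs \<longlonglongrightarrow> (1 / norm w) *\<^sub>R w" by (intro tendsto_intros dws)
        show "(zeta' \<circ> r2) \<longlonglongrightarrow> zh" by (rule r2(2))
        show "?ts n > 0" for n using tpos[of "s n"] wpos by simp
        show "?ts \<longlonglongrightarrow> 0"
          using tendsto_mult[OF LIMSEQ_subseq_LIMSEQ[OF t0 s] tendsto_const[of "norm w"]] by (simp add: o_def)
        show "?taus n > 0" for n by (rule ts_pos)
        show "?taus \<longlonglongrightarrow> 0" by (rule ts0)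
        have "filterlim (\<lambda>n. (1 / norm w) * norm (zeta (s n))) at_top sequentially"
          by (rule filterlim_tendsto_pos_mult_at_top[OF tendsto_const _ inf]) (use wpos in simp)
        moreover have "(1 / norm w) * norm (zeta (s n)) = ?taus n / ?ts n" for n
          using tpos[of "s n"] wpos by simp
        ultimately show "filterlim (\<lambda>n. ?taus n / ?ts n) at_top sequentially" by simp
        show "(gb + ?ts n *\<^sub>R ?qs n, yb + ?taus n *\<^sub>R (zeta' \<circ> r2) n) \<in> gph_normal D" for n
          using gph[of "s n"] nupt2[of n] tpos[of "s n"] wpos by simp
      qed
      then show False using B2 Ly0 Lzh dn by blast
    qed
  qed
  then obtain z r where r: "strict_mono r" "(zeta \<circ> r) \<longlonglongrightarrow> z"
    using bounded_imp_convergent_subsequence by blast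
  have zin: "z \<in> gderiv_normal D gb yb w"
    unfolding gderiv_normal_def tcone_def
  proof (intro CollectI exI conjI allI)
    let ?ws = "\<lambda>n. ((1 / t (r n)) *\<^sub>R (d (r n) - gb), zeta (r n))"
    show "(t \<circ> r) n > 0" for n using tpos by simp
    show "(t \<circ> r) \<longlonglongrightarrow> 0" by (rule LIMSEQ_subseq_LIMSEQ[OF t0 r(1)])
    show "?ws \<longlonglongrightarrow> (w, z)"
      using LIMSEQ_subseq_LIMSEQ[OF dw r(1)] r(2) by (auto intro!: tendsto_Pair simp: o_def)
    show "(gb, yb) + (t \<circ> r) n *\<^sub>R ?ws n \<in> gph_normal D" for n
      using gph[of "r n"] nupt[of "r n"] dpt[of "r n"] by simp
  qed
  have "(\<lambda>n. L ((zeta \<circ> r) n)) \<longlonglongrightarrow> L z" by (rule bounded_linear.tendsto[OF bl r(2)])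
  moreover have "(\<lambda>n. L ((zeta \<circ> r) n)) \<longlonglongrightarrow> a"
    using LIMSEQ_subseq_LIMSEQ[OF Lzeta r(1)] by (simp add: o_def)
  ultimately have "L z = a" by (rule LIMSEQ_unique)
  then show ?thesis using dn Ly0 zin by blast
qed

lemma mainlem:
  fixes L P :: "'b::euclidean_space \<Rightarrow> 'a::euclidean_space" and R :: "nat \<Rightarrow> 'b \<Rightarrow> 'a" and D :: "'b set"
    and t :: "nat \<Rightarrow> real" and d lam :: "nat \<Rightarrow> 'b" and xsk :: "nat \<Rightarrow> 'a"
  assumes lin: "linear L" and linR: "\<And>k. linear (R k)"
    and A: "\<And>ys zs. L ys = 0 \<Longrightarrow> P ys + L zs = 0 \<Longrightarrow> ys \<in> dnormal D gb w \<Longrightarrow>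
             zs \<in> gderiv_normal D gb ys w \<Longrightarrow> ys = 0"
    and B: "(\<forall>ys zh. L ys = 0 \<and> L zh = 0 \<and> ys \<in> dnormal D gb w \<and> zh \<in> gderiv_normal D gb ys 0 \<longrightarrow> zh = 0)
          \<or> (w \<noteq> 0 \<and> (\<forall>ys zh. L ys = 0 \<and> L zh = 0 \<and> ys \<in> dnormal D gb w \<longrightarrow>
               zh \<notin> gsubderiv (gph_normal D) gb ys ((1 / norm w) *\<^sub>R w)))"
    and tpos: "\<And>k. t k > 0" and t0: "t \<longlonglongrightarrow> 0"
    and dw: "(\<lambda>k. (1 / t k) *\<^sub>R (d k - gb)) \<longlonglongrightarrow> w"
    and lam: "\<And>k. lam k \<in> rnormal D (d k)" and xsk: "xsk \<longlonglongrightarrow> xs"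
    and Rlim: "\<And>s vs v. strict_mono s \<Longrightarrow> vs \<longlonglongrightarrow> v \<Longrightarrow> (\<lambda>n. R (s n) (vs n)) \<longlonglongrightarrow> P v"
    and rel: "\<And>k. L (lam k) = xsk k - R k (t k *\<^sub>R lam k)"
  shows "\<exists>ys zs. xs = P ys + L zs \<and> ys \<in> dnormal D gb w \<and> L ys = 0 \<and> zs \<in> gderiv_normal D gb ys w"
proof -
  define nu where "nu k = t k *\<^sub>R lam k" for k
  have nuD: "nu k \<in> rnormal D (d k)" for k
    unfolding nu_def using rnormal_scale[OF lam[of k], of "t k"] tpos[of k] by simp
  have Lnu: "(1 / t k) *\<^sub>R L (nu k) = xsk k - R k (nu k)" for k
    unfolding nu_def using tpos[of k] rel[of k] by (simp add: linear_scale[OF lin])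
  have bdd: "bounded (range nu)"
  proof (rule ccontr)
    assume nb: "\<not> bounded (range nu)"
    obtain r where r: "strict_mono r" "\<And>n. norm (nu (r n)) > real n"
      using unbounded_subseq[OF nb] by blast
    have npos: "norm (nu (r n)) > 0" for n using r(2)[of n] by linarith
    define nu' where "nu' n = (1 / norm (nu (r n))) *\<^sub>R nu (r n)" for n
    have nn': "norm (nu' n) = 1" for n
      unfolding nu'_def using npos[of n] by simp
    have "bounded (range nu')"
      unfolding bounded_iff using nn' by auto
    then obtain yh r2 where r2: "strict_mono r2" "(nu' \<circ> r2) \<longlonglongrightarrow> yh"
      using bounded_imp_convergent_subsequence by blast
    have "(\<lambda>n. norm ((nu' \<circ> r2) n)) \<longlonglongrightarrow> norm yh" by (rule tendsto_norm[OF r2(2)])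
    then have nyh: "norm yh = 1" using nn' by (simp add: o_def LIMSEQ_const_iff)
    define s where "s = r \<circ> r2"
    have s: "strict_mono s" unfolding s_def using r(1) r2(1) by (rule strict_mono_o)
    have inf: "filterlim (\<lambda>n. norm (nu (s n))) at_top sequentially"
    proof (rule filterlim_at_top_mono[OF filterlim_real_sequentially])
      show "\<forall>\<^sub>F n in sequentially. real n \<le> norm (nu (s n))"
      proof (rule always_eventually, rule allI)
        fix n
        have "real n \<le> real (r2 n)" using seq_suble[OF r2(1), of n] by simp
        also have "\<dots> < norm (nu (s n))" unfolding s_def using r(2)[of "r2 n"] by simp
        finally show "real n \<le> norm (nu (s n))" by simp
      qed
    qed
    have inv0: "(\<lambda>n. 1 / norm (nu (s n))) \<longlonglongrightarrow> 0"
      using tendsto_inverse_0_at_top[OF inf] by (simp add: divide_inverse)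
    have nr2: "nu' (r2 n) = (1 / norm (nu (s n))) *\<^sub>R nu (s n)" for n
      unfolding nu'_def s_def by simp
    have c: "yh \<in> dnormal D gb w \<and> L yh = 0 \<and> (\<exists>z. z \<in> gderiv_normal D gb yh w \<and> L z = - P yh)"
    proof (rule core[OF lin B, where t="\<lambda>n. t (s n)" and d="\<lambda>n. d (s n)" and nu="\<lambda>n. nu' (r2 n)"])
      show "t (s k) > 0" for k by (rule tpos)
      show "(\<lambda>n. t (s n)) \<longlonglongrightarrow> 0" using LIMSEQ_subseq_LIMSEQ[OF t0 s] by (simp add: o_def)
      show "(\<lambda>k. (1 / t (s k)) *\<^sub>R (d (s k) - gb)) \<longlonglongrightarrow> w"
        using LIMSEQ_subseq_LIMSEQ[OF dw s] by (simp add: o_def)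
      show "nu' (r2 k) \<in> rnormal D (d (s k))" for k
        unfolding nr2 by (rule rnormal_scale[OF nuD]) simp
      show "(\<lambda>n. nu' (r2 n)) \<longlonglongrightarrow> yh" using r2(2) by (simp add: o_def)
      have eq: "(1 / t (s k)) *\<^sub>R L (nu' (r2 k)) = (1 / norm (nu (s k))) *\<^sub>R xsk (s k) - R (s k) (nu' (r2 k))" for k
      proof -
        have "(1 / t (s k)) *\<^sub>R L (nu' (r2 k)) = (1 / norm (nu (s k))) *\<^sub>R ((1 / t (s k)) *\<^sub>R L (nu (s k)))"
          unfolding nr2 by (simp add: linear_scale[OF lin])
        also have "\<dots> = (1 / norm (nu (s k))) *\<^sub>R (xsk (s k) - R (s k) (nu (s k)))" by (simp only: Lnu)
        also have "\<dots> = (1 / norm (nu (s k))) *\<^sub>R xsk (s k) - R (s k) (nu' (r2 k))"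
          unfolding nr2 by (simp add: linear_scale[OF linR] scaleR_diff_right)
        finally show ?thesis .
      qed
      have "(\<lambda>k. (1 / norm (nu (s k))) *\<^sub>R xsk (s k) - R (s k) (nu' (r2 k))) \<longlonglongrightarrow> 0 *\<^sub>R xs - P yh"
        by (intro tendsto_diff tendsto_scaleR inv0 Rlim[OF s])
           (use LIMSEQ_subseq_LIMSEQ[OF xsk s] r2(2) in \<open>simp_all add: o_def\<close>)
      then show "(\<lambda>k. (1 / t (s k)) *\<^sub>R L (nu' (r2 k))) \<longlonglongrightarrow> - P yh" unfolding eq by simp
    qed
    then obtain z where "L yh = 0" "yh \<in> dnormal D gb w" "z \<in> gderiv_normal D gb yh w" "L z = - P yh"
      by blast
    then have "yh = 0" using A[of yh z] by simp
    then show False using nyh by simp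
  qed
  then obtain yb r where r: "strict_mono r" "(nu \<circ> r) \<longlonglongrightarrow> yb"
    using bounded_imp_convergent_subsequence by blast
  have c: "yb \<in> dnormal D gb w \<and> L yb = 0 \<and> (\<exists>z. z \<in> gderiv_normal D gb yb w \<and> L z = xs - P yb)"
  proof (rule core[OF lin B, where t="\<lambda>n. t (r n)" and d="\<lambda>n. d (r n)" and nu="\<lambda>n. nu (r n)"])
    show "t (r k) > 0" for k by (rule tpos)
    show "(\<lambda>n. t (r n)) \<longlonglongrightarrow> 0" using LIMSEQ_subseq_LIMSEQ[OF t0 r(1)] by (simp add: o_def)
    show "(\<lambda>k. (1 / t (r k)) *\<^sub>R (d (r k) - gb)) \<longlonglongrightarrow> w"
      using LIMSEQ_subseq_LIMSEQ[OF dw r(1)] by (simp add: o_def)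
    show "nu (r k) \<in> rnormal D (d (r k))" for k by (rule nuD)
    show "(\<lambda>n. nu (r n)) \<longlonglongrightarrow> yb" using r(2) by (simp add: o_def)
    have "(\<lambda>k. xsk (r k) - R (r k) (nu (r k))) \<longlonglongrightarrow> xs - P yb"
      by (intro tendsto_diff Rlim[OF r(1)])
         (use LIMSEQ_subseq_LIMSEQ[OF xsk r(1)] r(2) in \<open>simp_all add: o_def\<close>)
    then show "(\<lambda>k. (1 / t (r k)) *\<^sub>R L (nu (r k))) \<longlonglongrightarrow> xs - P yb" by (simp only: Lnu)
  qed
  then obtain z where "L yb = 0" "yb \<in> dnormal D gb w" "z \<in> gderiv_normal D gb yb w" "L z = xs - P yb"
    by blast
  then show ?thesis by (intro exI[of _ yb] exI[of _ z]) auto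
qed

lemma lin_blinfun: "linear (blinfun_apply (G'::'a::real_normed_vector \<Rightarrow>\<^sub>L 'b::real_normed_vector))"
  by (rule bounded_linear.linear[OF blinfun.bounded_linear_right])

lemma D_to_G:
  fixes g :: "'a::euclidean_space \<Rightarrow> 'b::euclidean_space" and G' :: "'a \<Rightarrow>\<^sub>L 'b"
  assumes dg: "(g has_derivative blinfun_apply G') (at x)"
    and lam: "lam \<in> rnormal D (g x - y)"
  shows "(adjoint (blinfun_apply G') lam, - lam) \<in> rnormal {(x, y). g x - y \<in> D} (x, y)"
proof -
  define K where "K = norm G'"
  have K0: "K \<ge> 0" unfolding K_def by simp
  have inD: "g x - y \<in> D" using rnormal_in[OF lam] .
  have adj: "adjoint (blinfun_apply G') lam \<bullet> h = lam \<bullet> blinfun_apply G' h" for h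
    using adjoint_works[OF lin_blinfun, of h G' lam] by (simp add: inner_commute)
  have der: "\<forall>e>0. \<exists>d>0. \<forall>x'. norm (x' - x) < d \<longrightarrow> norm (g x' - g x - blinfun_apply G' (x' - x)) \<le> e * norm (x' - x)"
    using dg by (simp add: has_derivative_at_alt)
  have lamN: "\<forall>e>0. \<exists>d>0. \<forall>y'\<in>D. dist y' (g x - y) < d \<longrightarrow> inner lam (y' - (g x - y)) \<le> e * norm (y' - (g x - y))"
    using lam unfolding rnormal_def by blast
  show ?thesis
    unfolding rnormal_def
  proof (rule CollectI, rule conjI)
    show "(x, y) \<in> {(x, y). g x - y \<in> D}" using inD by simp
    show "\<forall>e>0. \<exists>d>0. \<forall>p\<in>{(x, y). g x - y \<in> D}. dist p (x, y) < d \<longrightarrow>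
            inner (adjoint (blinfun_apply G') lam, - lam) (p - (x, y)) \<le> e * norm (p - (x, y))"
  proof (intro allI impI)
    fix e :: real assume e: "e > 0"
    define e1 where "e1 = e / (2 * (K + 2))"
    define e2 where "e2 = min 1 (e / (2 * (norm lam + 1)))"
    have e1: "e1 > 0" unfolding e1_def using e K0 by simp
    have "norm lam + 1 > 0" using norm_ge_zero[of lam] by linarith
    then have nl: "2 * (norm lam + 1) > 0" by simp
    have "e / (2 * (norm lam + 1)) > 0" by (rule divide_pos_pos[OF e nl])
    then have e2: "e2 > 0" unfolding e2_def by simp
    obtain d1 where d1: "d1 > 0" "\<forall>y'\<in>D. dist y' (g x - y) < d1 \<longrightarrow> inner lam (y' - (g x - y)) \<le> e1 * norm (y' - (g x - y))"
      using lamN e1 by blast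
    obtain d2 where d2: "d2 > 0" "\<forall>x'. norm (x' - x) < d2 \<longrightarrow> norm (g x' - g x - blinfun_apply G' (x' - x)) \<le> e2 * norm (x' - x)"
      using der e2 by blast
    show "\<exists>d>0. \<forall>p\<in>{(x, y). g x - y \<in> D}. dist p (x, y) < d \<longrightarrow>
            inner (adjoint (blinfun_apply G') lam, - lam) (p - (x, y)) \<le> e * norm (p - (x, y))"
    proof (intro exI[of _ "min d2 (d1 / (K + 2))"] conjI ballI impI)
      show "min d2 (d1 / (K + 2)) > 0" using d1 d2 K0 by simp
      fix p assume pG: "p \<in> {(x, y). g x - y \<in> D}" and pd: "dist p (x, y) < min d2 (d1 / (K + 2))"
      obtain x' y' where p: "p = (x', y')" by (cases p)
      define h where "h = x' - x"
      define k where "k = y' - y"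
      define n where "n = norm (h, k)"
      have pn: "p - (x, y) = (h, k)" unfolding p h_def k_def by simp
      have nlt: "n < min d2 (d1 / (K + 2))" using pd unfolding n_def dist_norm pn .
      have hn: "norm h \<le> n" unfolding n_def by (rule norm_fst_le)
      have kn: "norm k \<le> n" unfolding n_def by (rule norm_snd_le)
      define r where "r = g x' - g x - blinfun_apply G' h"
      have rb: "norm r \<le> e2 * norm h"
        unfolding r_def h_def using d2(2) hn nlt by (simp add: h_def)
      have e2le1: "e2 \<le> 1" unfolding e2_def by simp
      have d'D: "g x' - y' \<in> D" using pG p by simp
      have dd: "(g x' - y') - (g x - y) = blinfun_apply G' h + r - k"
        unfolding r_def k_def by simp
      have Gh: "norm (blinfun_apply G' h) \<le> K * norm h" unfolding K_def by (rule norm_blinfun)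
      have "norm ((g x' - y') - (g x - y)) \<le> norm (blinfun_apply G' h) + norm r + norm k"
        unfolding dd using norm_triangle_ineq4[of "blinfun_apply G' h + r" k] norm_triangle_ineq[of "blinfun_apply G' h" r]
        by linarith
      also have "\<dots> \<le> K * n + n + n"
      proof -
        have "K * norm h \<le> K * n" using hn K0 by (rule mult_left_mono)
        moreover have "e2 * norm h \<le> 1 * norm h" using e2le1 by (intro mult_right_mono) auto
        ultimately show ?thesis using Gh rb hn kn by linarith
      qed
      finally have ddn: "norm ((g x' - y') - (g x - y)) \<le> (K + 2) * n" by (simp add: algebra_simps)
      have "(K + 2) * n < d1"
        using nlt K0 by (simp add: less_divide_eq mult.commute)
      with ddn have "dist (g x' - y') (g x - y) < d1" by (simp add: dist_norm)
      with d1(2) d'D have i1: "inner lam ((g x' - y') - (g x - y)) \<le> e1 * norm ((g x' - y') - (g x - y))"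
        by blast
      also have "\<dots> \<le> e1 * ((K + 2) * n)" using ddn e1 by (simp add: mult_left_mono)
      also have "\<dots> = e / 2 * n" unfolding e1_def using K0 by (simp add: field_simps)
      finally have i1': "inner lam ((g x' - y') - (g x - y)) \<le> e / 2 * n" .
      have "- inner lam r \<le> norm lam * norm r"
        by (rule abs_le_D2[OF Cauchy_Schwarz_ineq2])
      also have "\<dots> \<le> norm lam * (e2 * n)"
      proof (rule mult_left_mono)
        have "e2 * norm h \<le> e2 * n" using hn e2 by (intro mult_left_mono) auto
        then show "norm r \<le> e2 * n" using rb by linarith
      qed simp
      also have "\<dots> \<le> e / 2 * n"
      proof -
        have "norm lam * e2 \<le> norm lam * (e / (2 * (norm lam + 1)))"
          unfolding e2_def by (intro mult_left_mono) auto
        also have "\<dots> = (e / 2) * (norm lam / (norm lam + 1))" by simp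
        also have "\<dots> \<le> (e / 2) * 1"
        proof (rule mult_left_mono)
          have "norm lam + 1 > 0" using norm_ge_zero[of lam] by linarith
          then show "norm lam / (norm lam + 1) \<le> 1" by (simp add: divide_le_eq_1)
        qed (use e in simp)
        finally have "norm lam * e2 \<le> e / 2" by simp
        then have "(norm lam * e2) * n \<le> (e / 2) * n" by (rule mult_right_mono) (simp add: n_def)
        then show ?thesis by (simp add: mult.assoc)
      qed
      finally have i2: "- inner lam r \<le> e / 2 * n" .
      have "inner (adjoint (blinfun_apply G') lam, - lam) (p - (x, y)) = inner lam ((g x' - y') - (g x - y)) - inner lam r"
        unfolding pn dd by (simp add: adj inner_diff_right inner_add_right)
      also have "\<dots> \<le> e * n" using i1' i2 by simp
      finally show "inner (adjoint (blinfun_apply G') lam, - lam) (p - (x, y)) \<le> e * norm (p - (x, y))"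
        unfolding pn n_def .
    qed
  qed
  qed
qed

lemma G_to_D:
  fixes g :: "'a::euclidean_space \<Rightarrow> 'b::euclidean_space" and G' :: "'a \<Rightarrow>\<^sub>L 'b"
  assumes dg: "(g has_derivative blinfun_apply G') (at x)"
    and xsl: "(xs, - lam) \<in> rnormal {(x, y). g x - y \<in> D} (x, y)"
  shows "lam \<in> rnormal D (g x - y) \<and> xs = adjoint (blinfun_apply G') lam"
proof -
  have inG: "g x - y \<in> D" using rnormal_in[OF xsl] by simp
  have GN: "\<forall>e>0. \<exists>d>0. \<forall>p\<in>{(x, y). g x - y \<in> D}. dist p (x, y) < d \<longrightarrow> inner (xs, - lam) (p - (x, y)) \<le> e * norm (p - (x, y))"
    using xsl unfolding rnormal_def by blast
  have adj: "adjoint (blinfun_apply G') lam \<bullet> h = lam \<bullet> blinfun_apply G' h" for h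
    using adjoint_works[OF lin_blinfun, of h G' lam] by (simp add: inner_commute)
  have der: "\<forall>e>0. \<exists>d>0. \<forall>x'. norm (x' - x) < d \<longrightarrow> norm (g x' - g x - blinfun_apply G' (x' - x)) \<le> e * norm (x' - x)"
    using dg by (simp add: has_derivative_at_alt)
  have part1: "lam \<in> rnormal D (g x - y)"
    unfolding rnormal_def
  proof (rule CollectI, rule conjI[OF inG], intro allI impI)
    fix e :: real assume e: "e > 0"
    obtain d where d: "d > 0" "\<forall>p\<in>{(x, y). g x - y \<in> D}. dist p (x, y) < d \<longrightarrow> inner (xs, - lam) (p - (x, y)) \<le> e * norm (p - (x, y))"
      using GN e by blast
    show "\<exists>d>0. \<forall>y'\<in>D. dist y' (g x - y) < d \<longrightarrow> inner lam (y' - (g x - y)) \<le> e * norm (y' - (g x - y))"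
    proof (intro exI[of _ d] conjI d(1) ballI impI)
      fix y' assume y'D: "y' \<in> D" and dd: "dist y' (g x - y) < d"
      have pG: "(x, y + (g x - y) - y') \<in> {(x, y). g x - y \<in> D}" using y'D by simp
      have pd: "(x, y + (g x - y) - y') - (x, y) = (0, (g x - y) - y')" by simp
      have nrm: "norm ((0::'a), (g x - y) - y') = norm (y' - (g x - y))"
        by (simp add: norm_Pair norm_minus_commute)
      have "dist (x, y + (g x - y) - y') (x, y) < d" using dd
        by (simp only: dist_norm pd nrm)
      with d(2) pG have "inner (xs, - lam) ((x, y + (g x - y) - y') - (x, y)) \<le> e * norm ((x, y + (g x - y) - y') - (x, y))"
        by blast
      then show "inner lam (y' - (g x - y)) \<le> e * norm (y' - (g x - y))"
        unfolding pd nrm by (simp add: inner_diff_right)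
    qed
  qed
  define v where "v = xs - adjoint (blinfun_apply G') lam"
  have "v = 0"
  proof (rule ccontr)
    assume vne: "v \<noteq> 0"
    then have nv: "norm v > 0" by simp
    define K where "K = norm G'"
    have K0: "K \<ge> 0" unfolding K_def by simp
    define C where "C = K + 2 + norm lam"
    have C0: "C > 0" unfolding C_def using K0 norm_ge_zero[of lam] by linarith
    define e where "e = min 1 (norm v / (2 * C))"
    have e0: "e > 0" unfolding e_def using nv C0 by simp
    have e1: "e \<le> 1" unfolding e_def by simp
    have eC: "e * C \<le> norm v / 2"
    proof -
      have "e \<le> norm v / (2 * C)" unfolding e_def by simp
      then have "e * C \<le> norm v / (2 * C) * C" using C0 by (intro mult_right_mono) auto
      also have "\<dots> = norm v / 2" using C0 by simp
      finally show ?thesis .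
    qed
    obtain d where d: "d > 0" "\<forall>p\<in>{(x, y). g x - y \<in> D}. dist p (x, y) < d \<longrightarrow> inner (xs, - lam) (p - (x, y)) \<le> e * norm (p - (x, y))"
      using GN e0 by blast
    obtain d2 where d2: "d2 > 0" "\<forall>x'. norm (x' - x) < d2 \<longrightarrow> norm (g x' - g x - blinfun_apply G' (x' - x)) \<le> e * norm (x' - x)"
      using der e0 by blast
    define m where "m = min d2 (d / (K + 2))"
    define rho where "rho = m / 2"
    have m0: "m > 0" unfolding m_def using d d2 K0 by simp
    have rho0: "rho > 0" unfolding rho_def using m0 by simp
    have rho1: "rho < d2"
    proof -
      have "m \<le> d2" unfolding m_def by (rule min.cobounded1)
      then show ?thesis unfolding rho_def using d2(1) by linarith
    qed
    have rho2: "rho < d / (K + 2)"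
    proof -
      have q: "d / (K + 2) > 0" using d K0 by simp
      have "m \<le> d / (K + 2)" unfolding m_def by (rule min.cobounded2)
      then show ?thesis unfolding rho_def using q by linarith
    qed
    define h where "h = (rho / norm v) *\<^sub>R v"
    have nh: "norm h = rho" unfolding h_def using nv rho0 by simp
    have vh: "v \<bullet> h = rho * norm v"
      unfolding h_def using nv by (simp add: power2_norm_eq_inner[symmetric] power2_eq_square)
    define Dl where "Dl = g (x + h) - g x"
    define r where "r = Dl - blinfun_apply G' h"
    have rb: "norm r \<le> e * norm h"
      using d2(2)[rule_format, of "x + h"] nh rho1 by (simp add: r_def Dl_def)
    have Gh: "norm (blinfun_apply G' h) \<le> K * norm h" unfolding K_def by (rule norm_blinfun)
    have rh: "norm r \<le> norm h" using rb e1 mult_right_mono[OF e1 norm_ge_zero[of h]] by simp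
    have nDl: "norm Dl \<le> K * norm h + norm h"
      using norm_triangle_ineq[of "blinfun_apply G' h" r] Gh rh by (simp add: r_def)
    have pG: "(x + h, y + Dl) \<in> {(x, y). g x - y \<in> D}" using inG by (simp add: Dl_def)
    have pd: "(x + h, y + Dl) - (x, y) = (h, Dl)" by simp
    have nP: "norm (h, Dl) \<le> (K + 2) * norm h"
      using norm_Pair_le[of h Dl] nDl by (simp add: algebra_simps)
    have "(K + 2) * norm h < d" using rho2 K0 nh by (simp add: less_divide_eq mult.commute)
    with nP have "dist (x + h, y + Dl) (x, y) < d" by (simp add: dist_norm pd)
    with d(2) pG have ineq: "inner (xs, - lam) (h, Dl) \<le> e * norm (h, Dl)"
      using pd by fastforce
    have lhs: "inner (xs, - lam) (h, Dl) = v \<bullet> h - lam \<bullet> r"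
      by (simp add: v_def r_def inner_diff_left inner_diff_right adj)
    have "- (lam \<bullet> r) \<ge> - (norm lam * norm r)"
      using abs_le_D1[OF Cauchy_Schwarz_ineq2[of lam r]] by simp
    moreover have "norm lam * norm r \<le> norm lam * (e * norm h)" using rb by (simp add: mult_left_mono)
    moreover have "e * norm (h, Dl) \<le> e * ((K + 2) * norm h)" using nP e0 by (simp add: mult_left_mono)
    ultimately have "v \<bullet> h \<le> e * ((K + 2) * norm h) + norm lam * (e * norm h)"
      using ineq lhs by linarith
    also have "\<dots> = (e * C) * rho" unfolding C_def nh by (simp add: algebra_simps)
    also have "\<dots> \<le> (norm v / 2) * rho" using eC rho0 by (simp add: mult_right_mono)
    finally have "rho * norm v \<le> (norm v / 2) * rho" unfolding vh .
    then show False using rho0 nv by (simp add: mult.commute)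
  qed
  then show ?thesis using part1 unfolding v_def by simp
qed

lemma adj_tendsto:
  fixes M :: "nat \<Rightarrow> 'a::euclidean_space \<Rightarrow>\<^sub>L 'b::euclidean_space"
  assumes "M \<longlonglongrightarrow> M0" "vs \<longlonglongrightarrow> v"
  shows "(\<lambda>n. adjoint (blinfun_apply (M n)) (vs n)) \<longlonglongrightarrow> adjoint (blinfun_apply M0) v"
proof -
  have "(\<lambda>n. \<Sum>i\<in>Basis. (blinfun_apply (M n) i \<bullet> vs n) *\<^sub>R i) \<longlonglongrightarrow> (\<Sum>i\<in>Basis. (blinfun_apply M0 i \<bullet> v) *\<^sub>R i)"
    by (intro tendsto_sum tendsto_scaleR tendsto_inner blinfun.tendsto assms tendsto_const)
  then show ?thesis by (simp add: adj_repr[OF lin_blinfun])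
qed

lemma keystep:
  fixes g :: "'a::euclidean_space \<Rightarrow> 'b::euclidean_space"
    and g' :: "'a \<Rightarrow> ('a \<Rightarrow>\<^sub>L 'b)"
    and g'' :: "'a \<Rightarrow> ('a \<Rightarrow>\<^sub>L ('a \<Rightarrow>\<^sub>L 'b))"
    and D :: "'b set" and xb u :: 'a
  assumes dg: "\<And>x. (g has_derivative blinfun_apply (g' x)) (at x)"
    and d2g: "\<And>x. (g' has_derivative blinfun_apply (g'' x)) (at x)"
    and ingph: "g xb \<in> D"
    and A: "\<And>ys zs. adjoint (blinfun_apply (g' xb)) ys = 0 \<Longrightarrow>
             adjoint (blinfun_apply (blinfun_apply (g'' xb) u)) ys + adjoint (blinfun_apply (g' xb)) zs = 0 \<Longrightarrow>
             ys \<in> dnormal D (g xb) (blinfun_apply (g' xb) u) \<Longrightarrow>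
             zs \<in> gderiv_normal D (g xb) ys (blinfun_apply (g' xb) u) \<Longrightarrow> ys = 0"
    and B: "(\<forall>ys zh. adjoint (blinfun_apply (g' xb)) ys = 0 \<and> adjoint (blinfun_apply (g' xb)) zh = 0 \<and>
               ys \<in> dnormal D (g xb) (blinfun_apply (g' xb) u) \<and>
               zh \<in> gderiv_normal D (g xb) ys 0 \<longrightarrow> zh = 0)
          \<or> (blinfun_apply (g' xb) u \<noteq> 0 \<and>
             (\<forall>ys zh. adjoint (blinfun_apply (g' xb)) ys = 0 \<and> adjoint (blinfun_apply (g' xb)) zh = 0 \<and>
               ys \<in> dnormal D (g xb) (blinfun_apply (g' xb) u) \<longrightarrow>
               zh \<notin> gsubderiv (gph_normal D) (g xb) ys
                      ((1 / norm (blinfun_apply (g' xb) u)) *\<^sub>R blinfun_apply (g' xb) u)))"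
    and inG: "\<And>k. (xk k, yk k) \<in> {(x, y). g x - y \<in> D}"
    and notG: "\<And>k. (xk k, 0) \<notin> {(x, y). g x - y \<in> D}"
    and cod: "\<And>k. xsk k \<in> rcoderiv {(x, y). g x - y \<in> D} (xk k) (yk k) (lam k)"
    and xk: "xk \<longlonglongrightarrow> xb" and xsk: "xsk \<longlonglongrightarrow> xs"
    and dir: "(\<lambda>k. (1 / norm (xk k - xb)) *\<^sub>R (xk k - xb)) \<longlonglongrightarrow> u"
    and ydir: "(\<lambda>k. (1 / norm (xk k - xb)) *\<^sub>R (yk k - 0)) \<longlonglongrightarrow> 0"
  shows "\<exists>ys zs. xs = adjoint (blinfun_apply (blinfun_apply (g'' xb) u)) ys + adjoint (blinfun_apply (g' xb)) zs \<and>
           ys \<in> dnormal D (g xb) (blinfun_apply (g' xb) u) \<and> adjoint (blinfun_apply (g' xb)) ys = 0 \<and>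
           zs \<in> gderiv_normal D (g xb) ys (blinfun_apply (g' xb) u)"
proof -
  define t where "t k = norm (xk k - xb)" for k
  define M where "M k = (1 / t k) *\<^sub>R (g' (xk k) - g' xb)" for k
  have ne: "xk k \<noteq> xb" for k using notG[of k] ingph by auto
  have tpos: "t k > 0" for k unfolding t_def using ne[of k] by simp
  have t0: "t \<longlonglongrightarrow> 0" unfolding t_def using tendsto_norm[OF LIM_zero[OF xk]] by simp
  have gd: "(\<lambda>k. (1 / t k) *\<^sub>R (g (xk k) - g xb)) \<longlonglongrightarrow> blinfun_apply (g' xb) u"
    unfolding t_def by (rule deriv_seq[OF dg xk ne dir])
  have Mlim: "M \<longlonglongrightarrow> blinfun_apply (g'' xb) u"
    unfolding M_def t_def by (rule deriv_seq[OF d2g xk ne dir])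
  have lamk: "lam k \<in> rnormal D (g (xk k) - yk k) \<and> xsk k = adjoint (blinfun_apply (g' (xk k))) (lam k)" for k
    by (rule G_to_D[OF dg]) (use cod[of k] in \<open>simp add: rcoderiv_def\<close>)
  show ?thesis
  proof (rule mainlem[where t=t and d="\<lambda>k. g (xk k) - yk k" and lam=lam and xsk=xsk
        and R="\<lambda>k. adjoint (blinfun_apply (M k))"])
    show "linear (adjoint (blinfun_apply (g' xb)))" by (rule adjoint_linear[OF lin_blinfun])
    show "linear (adjoint (blinfun_apply (M k)))" for k by (rule adjoint_linear[OF lin_blinfun])
    show "\<And>ys zs. adjoint (blinfun_apply (g' xb)) ys = 0 \<Longrightarrow>
             adjoint (blinfun_apply (blinfun_apply (g'' xb) u)) ys + adjoint (blinfun_apply (g' xb)) zs = 0 \<Longrightarrow>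
             ys \<in> dnormal D (g xb) (blinfun_apply (g' xb) u) \<Longrightarrow>
             zs \<in> gderiv_normal D (g xb) ys (blinfun_apply (g' xb) u) \<Longrightarrow> ys = 0" by (rule A)
    show "(\<forall>ys zh. adjoint (blinfun_apply (g' xb)) ys = 0 \<and> adjoint (blinfun_apply (g' xb)) zh = 0 \<and>
               ys \<in> dnormal D (g xb) (blinfun_apply (g' xb) u) \<and>
               zh \<in> gderiv_normal D (g xb) ys 0 \<longrightarrow> zh = 0)
          \<or> (blinfun_apply (g' xb) u \<noteq> 0 \<and>
             (\<forall>ys zh. adjoint (blinfun_apply (g' xb)) ys = 0 \<and> adjoint (blinfun_apply (g' xb)) zh = 0 \<and>
               ys \<in> dnormal D (g xb) (blinfun_apply (g' xb) u) \<longrightarrow>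
               zh \<notin> gsubderiv (gph_normal D) (g xb) ys
                      ((1 / norm (blinfun_apply (g' xb) u)) *\<^sub>R blinfun_apply (g' xb) u)))" by (rule B)
    show "t k > 0" for k by (rule tpos)
    show "t \<longlonglongrightarrow> 0" by (rule t0)
    have "(\<lambda>k. (1 / t k) *\<^sub>R (g (xk k) - g xb) - (1 / t k) *\<^sub>R (yk k - 0)) \<longlonglongrightarrow> blinfun_apply (g' xb) u - 0"
      by (intro tendsto_diff gd) (use ydir in \<open>simp add: t_def\<close>)
    then show "(\<lambda>k. (1 / t k) *\<^sub>R ((g (xk k) - yk k) - g xb)) \<longlonglongrightarrow> blinfun_apply (g' xb) u"
      by (simp add: scaleR_diff_right algebra_simps)
    show "lam k \<in> rnormal D (g (xk k) - yk k)" for k using lamk by blast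
    show "xsk \<longlonglongrightarrow> xs" by (rule xsk)
    show "(\<lambda>n. adjoint (blinfun_apply (M (s n))) (vs n)) \<longlonglongrightarrow> adjoint (blinfun_apply (blinfun_apply (g'' xb) u)) v"
      if s: "strict_mono s" and vs: "vs \<longlonglongrightarrow> v" for s vs v
      by (rule adj_tendsto[OF _ vs]) (use LIMSEQ_subseq_LIMSEQ[OF Mlim s] in \<open>simp add: o_def\<close>)
    show "adjoint (blinfun_apply (g' xb)) (lam k) = xsk k - adjoint (blinfun_apply (M k)) (t k *\<^sub>R lam k)" for k
    proof -
      have tn: "t k \<noteq> 0" using tpos[of k] by simp
      have "xsk k - adjoint (blinfun_apply (M k)) (t k *\<^sub>R lam k)
          = (\<Sum>i\<in>Basis. (blinfun_apply (g' (xk k)) i \<bullet> lam k) *\<^sub>R i) - (\<Sum>i\<in>Basis. (blinfun_apply (M k) i \<bullet> (t k *\<^sub>R lam k)) *\<^sub>R i)"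
        using lamk[of k] by (simp add: adj_repr[OF lin_blinfun])
      also have "\<dots> = (\<Sum>i\<in>Basis. (blinfun_apply (g' (xk k)) i \<bullet> lam k) *\<^sub>R i - (blinfun_apply (M k) i \<bullet> (t k *\<^sub>R lam k)) *\<^sub>R i)"
        by (simp add: sum_subtractf)
      also have "\<dots> = (\<Sum>i\<in>Basis. (blinfun_apply (g' xb) i \<bullet> lam k) *\<^sub>R i)"
      proof (rule sum.cong[OF refl])
        fix i :: 'a
        have "blinfun_apply (M k) i \<bullet> (t k *\<^sub>R lam k) = (blinfun_apply (g' (xk k)) i - blinfun_apply (g' xb) i) \<bullet> lam k"
          unfolding M_def using tn by (simp add: inner_diff_left scaleR_blinfun.rep_eq minus_blinfun.rep_eq)
        then show "(blinfun_apply (g' (xk k)) i \<bullet> lam k) *\<^sub>R i - (blinfun_apply (M k) i \<bullet> (t k *\<^sub>R lam k)) *\<^sub>R i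
            = (blinfun_apply (g' xb) i \<bullet> lam k) *\<^sub>R i"
          by (simp add: inner_diff_left scaleR_diff_left[symmetric])
      qed
      also have "\<dots> = adjoint (blinfun_apply (g' xb)) (lam k)" by (simp add: adj_repr[OF lin_blinfun])
      finally show ?thesis by simp
    qed
  qed
qed

theorem mainTheorem11:
  fixes g :: "'a::euclidean_space \<Rightarrow> 'b::euclidean_space"
    and g' :: "'a \<Rightarrow> ('a \<Rightarrow>\<^sub>L 'b)"
    and g'' :: "'a \<Rightarrow> ('a \<Rightarrow>\<^sub>L ('a \<Rightarrow>\<^sub>L 'b))"
    and D :: "'b set" and xb u :: 'a
  assumes dg: "\<And>x. (g has_derivative blinfun_apply (g' x)) (at x)"
    and d2g: "\<And>x. (g' has_derivative blinfun_apply (g'' x)) (at x)"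
    and cont: "continuous_on UNIV g''"
    and closedD: "closed D"
    and ingph: "g xb \<in> D"
    and unit: "norm u = 1"
    and A: "\<And>ys zs. adjoint (blinfun_apply (g' xb)) ys = 0 \<Longrightarrow>
             adjoint (blinfun_apply (blinfun_apply (g'' xb) u)) ys + adjoint (blinfun_apply (g' xb)) zs = 0 \<Longrightarrow>
             ys \<in> dnormal D (g xb) (blinfun_apply (g' xb) u) \<Longrightarrow>
             zs \<in> gderiv_normal D (g xb) ys (blinfun_apply (g' xb) u) \<Longrightarrow> ys = 0"
    and B: "(\<forall>ys zh. adjoint (blinfun_apply (g' xb)) ys = 0 \<and> adjoint (blinfun_apply (g' xb)) zh = 0 \<and>
               ys \<in> dnormal D (g xb) (blinfun_apply (g' xb) u) \<and>
               zh \<in> gderiv_normal D (g xb) ys 0 \<longrightarrow> zh = 0)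
          \<or> (blinfun_apply (g' xb) u \<noteq> 0 \<and>
             (\<forall>ys zh. adjoint (blinfun_apply (g' xb)) ys = 0 \<and> adjoint (blinfun_apply (g' xb)) zh = 0 \<and>
               ys \<in> dnormal D (g xb) (blinfun_apply (g' xb) u) \<longrightarrow>
               zh \<notin> gsubderiv (gph_normal D) (g xb) ys
                      ((1 / norm (blinfun_apply (g' xb) u)) *\<^sub>R blinfun_apply (g' xb) u)))"
  shows "((\<forall>xs ys zs. xs = adjoint (blinfun_apply (blinfun_apply (g'' xb) u)) ys + adjoint (blinfun_apply (g' xb)) zs \<and>
              ys \<in> dnormal D (g xb) (blinfun_apply (g' xb) u) \<and> adjoint (blinfun_apply (g' xb)) ys = 0 \<and>
              zs \<in> gderiv_normal D (g xb) ys (blinfun_apply (g' xb) u)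
            \<longrightarrow> (\<exists>lam \<in> lnormal D (g xb). xs = adjoint (blinfun_apply (g' xb)) lam))
          \<longrightarrow> asymp_regular {(x, y). g x - y \<in> D} xb 0 u)
       \<and> ((\<forall>xs ys zs. xs = adjoint (blinfun_apply (blinfun_apply (g'' xb) u)) ys + adjoint (blinfun_apply (g' xb)) zs \<and>
              ys \<in> dnormal D (g xb) (blinfun_apply (g' xb) u) \<and> adjoint (blinfun_apply (g' xb)) ys = 0 \<and>
              zs \<in> gderiv_normal D (g xb) ys (blinfun_apply (g' xb) u)
            \<longrightarrow> (\<exists>lam \<in> dnormal D (g xb) (blinfun_apply (g' xb) u). xs = adjoint (blinfun_apply (g' xb)) lam))
          \<longrightarrow> strong_asymp_regular {(x, y). g x - y \<in> D} xb 0 u)"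
proof -
  let ?G = "{(x, y). g x - y \<in> D}"
  let ?L = "adjoint (blinfun_apply (g' xb))"
  let ?w = "blinfun_apply (g' xb) u"
  have linL: "linear ?L" by (rule adjoint_linear[OF lin_blinfun])
  have blL: "bounded_linear ?L" using linL by (simp add: linear_conv_bounded_linear)
  have key: "\<exists>ys zs. xs = adjoint (blinfun_apply (blinfun_apply (g'' xb) u)) ys + ?L zs \<and>
           ys \<in> dnormal D (g xb) ?w \<and> ?L ys = 0 \<and> zs \<in> gderiv_normal D (g xb) ys ?w"
    if prem: "(\<forall>k. (xk k, yk k) \<in> ?G) \<and> (\<forall>k. (xk k, 0) \<notin> ?G) \<and> (\<forall>k. yk k \<noteq> 0) \<and>
       (\<forall>k. xsk k \<in> rcoderiv ?G (xk k) (yk k) (lam k)) \<and>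
       xk \<longlonglongrightarrow> xb \<and> yk \<longlonglongrightarrow> 0 \<and> xsk \<longlonglongrightarrow> xs \<and>
       (\<lambda>k. (1 / norm (xk k - xb)) *\<^sub>R (xk k - xb)) \<longlonglongrightarrow> u \<and>
       (\<lambda>k. (1 / norm (xk k - xb)) *\<^sub>R (yk k - 0)) \<longlonglongrightarrow> 0 \<and> rest"
    for xk xsk :: "nat \<Rightarrow> 'a" and yk lam :: "nat \<Rightarrow> 'b" and xs :: 'a and rest
    using prem by (intro keystep[OF dg d2g ingph A B]) auto
  show ?thesis
  proof (intro conjI impI)
    assume H: "\<forall>xs ys zs. xs = adjoint (blinfun_apply (blinfun_apply (g'' xb) u)) ys + ?L zs \<and>
              ys \<in> dnormal D (g xb) ?w \<and> ?L ys = 0 \<and> zs \<in> gderiv_normal D (g xb) ys ?w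
            \<longrightarrow> (\<exists>lam \<in> lnormal D (g xb). xs = ?L lam)"
    show "asymp_regular ?G xb 0 u"
      unfolding asymp_regular_def asymp_reg_gen_def
    proof (intro allI impI)
      fix xk xsk :: "nat \<Rightarrow> 'a" and yk lam :: "nat \<Rightarrow> 'b" and xs :: 'a and ys :: 'b
      assume prem: "(\<forall>k. (xk k, yk k) \<in> ?G) \<and> (\<forall>k. (xk k, 0) \<notin> ?G) \<and> (\<forall>k. yk k \<noteq> 0) \<and>
       (\<forall>k. xsk k \<in> rcoderiv ?G (xk k) (yk k) (lam k)) \<and>
       xk \<longlonglongrightarrow> xb \<and> yk \<longlonglongrightarrow> 0 \<and> xsk \<longlonglongrightarrow> xs \<and>
       (\<lambda>k. (1 / norm (xk k - xb)) *\<^sub>R (xk k - xb)) \<longlonglongrightarrow> u \<and>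
       (\<lambda>k. (1 / norm (xk k - xb)) *\<^sub>R (yk k - 0)) \<longlonglongrightarrow> 0 \<and>
       filterlim (\<lambda>k. norm (lam k)) at_top sequentially \<and>
       (\<lambda>k. (1 / norm (yk k - 0)) *\<^sub>R (yk k - 0) - (1 / norm (lam k)) *\<^sub>R lam k) \<longlonglongrightarrow> 0 \<and>
       (\<lambda>k. (norm (yk k - 0) / norm (xk k - xb)) *\<^sub>R lam k) \<longlonglongrightarrow> ys"
      obtain y1 z1 where "xs = adjoint (blinfun_apply (blinfun_apply (g'' xb) u)) y1 + ?L z1 \<and>
           y1 \<in> dnormal D (g xb) ?w \<and> ?L y1 = 0 \<and> z1 \<in> gderiv_normal D (g xb) y1 ?w"
        using key[OF prem] by blast
      with H obtain l where l: "l \<in> lnormal D (g xb)" "xs = ?L l" by blast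
      from l(1) obtain xD vD where xv: "\<forall>k. vD k \<in> rnormal D (xD k)" "xD \<longlonglongrightarrow> g xb" "vD \<longlonglongrightarrow> l"
        unfolding lnormal_def by blast
      have "(xs, - l) \<in> lnormal ?G (xb, 0)"
        unfolding lnormal_def
      proof (intro CollectI exI conjI allI)
        show "(\<lambda>k. (?L (vD k), - vD k)) \<longlonglongrightarrow> (xs, - l)"
          unfolding l(2) by (intro tendsto_Pair tendsto_minus bounded_linear.tendsto[OF blL] xv(3))
        show "(\<lambda>k. (xb, g xb - xD k)) \<longlonglongrightarrow> (xb, 0)"
          using tendsto_Pair[OF tendsto_const tendsto_diff[OF tendsto_const xv(2)], of xb "g xb"] by simp
        show "(?L (vD k), - vD k) \<in> rnormal ?G (xb, g xb - xD k)" for k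
          by (rule D_to_G[OF dg]) (use xv(1) in simp)
      qed
      then show "xs \<in> (\<Union>lam. lcoderiv ?G xb 0 lam)" unfolding lcoderiv_def by blast
    qed
  next
    assume H: "\<forall>xs ys zs. xs = adjoint (blinfun_apply (blinfun_apply (g'' xb) u)) ys + ?L zs \<and>
              ys \<in> dnormal D (g xb) ?w \<and> ?L ys = 0 \<and> zs \<in> gderiv_normal D (g xb) ys ?w
            \<longrightarrow> (\<exists>lam \<in> dnormal D (g xb) ?w. xs = ?L lam)"
    show "strong_asymp_regular ?G xb 0 u"
      unfolding strong_asymp_regular_def asymp_reg_gen_def
    proof (intro allI impI)
      fix xk xsk :: "nat \<Rightarrow> 'a" and yk lam :: "nat \<Rightarrow> 'b" and xs :: 'a and ys :: 'b
      assume prem: "(\<forall>k. (xk k, yk k) \<in> ?G) \<and> (\<forall>k. (xk k, 0) \<notin> ?G) \<and> (\<forall>k. yk k \<noteq> 0) \<and>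
       (\<forall>k. xsk k \<in> rcoderiv ?G (xk k) (yk k) (lam k)) \<and>
       xk \<longlonglongrightarrow> xb \<and> yk \<longlonglongrightarrow> 0 \<and> xsk \<longlonglongrightarrow> xs \<and>
       (\<lambda>k. (1 / norm (xk k - xb)) *\<^sub>R (xk k - xb)) \<longlonglongrightarrow> u \<and>
       (\<lambda>k. (1 / norm (xk k - xb)) *\<^sub>R (yk k - 0)) \<longlonglongrightarrow> 0 \<and>
       filterlim (\<lambda>k. norm (lam k)) at_top sequentially \<and>
       (\<lambda>k. (1 / norm (yk k - 0)) *\<^sub>R (yk k - 0) - (1 / norm (lam k)) *\<^sub>R lam k) \<longlonglongrightarrow> 0 \<and>
       (\<lambda>k. (norm (yk k - 0) / norm (xk k - xb)) *\<^sub>R lam k) \<longlonglongrightarrow> ys"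
      obtain y1 z1 where "xs = adjoint (blinfun_apply (blinfun_apply (g'' xb) u)) y1 + ?L z1 \<and>
           y1 \<in> dnormal D (g xb) ?w \<and> ?L y1 = 0 \<and> z1 \<in> gderiv_normal D (g xb) y1 ?w"
        using key[OF prem] by blast
      with H obtain l where l: "l \<in> dnormal D (g xb) ?w" "xs = ?L l" by blast
      from l(1) obtain ts ws vs where tw: "\<forall>k. ts k > 0" "ts \<longlonglongrightarrow> 0" "ws \<longlonglongrightarrow> ?w"
          "\<forall>k. vs k \<in> rnormal D (g xb + ts k *\<^sub>R ws k)" "vs \<longlonglongrightarrow> l"
        unfolding dnormal_def by blast
      define xx where "xx k = xb + ts k *\<^sub>R u" for k
      have xx: "xx \<longlonglongrightarrow> xb"
        unfolding xx_def using tendsto_add[OF tendsto_const tendsto_scaleR[OF tw(2) tendsto_const], of xb u] by simp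
      have nxx: "norm (xx k - xb) = ts k" for k unfolding xx_def using unit tw(1)[rule_format, of k] by simp
      have xxne: "xx k \<noteq> xb" for k using nxx[of k] tw(1)[rule_format, of k] by auto
      have dxx: "(\<lambda>k. (1 / norm (xx k - xb)) *\<^sub>R (xx k - xb)) \<longlonglongrightarrow> u"
      proof -
        have "(1 / norm (xx k - xb)) *\<^sub>R (xx k - xb) = u" for k
          using nxx[of k] tw(1)[rule_format, of k] unfolding xx_def by simp
        then show ?thesis by simp
      qed
      have gl: "(\<lambda>k. (1 / ts k) *\<^sub>R (g (xx k) - g xb)) \<longlonglongrightarrow> ?w"
        using deriv_seq[OF dg xx xxne dxx] by (simp add: nxx)
      have cg': "isCont g' xb" using has_derivative_continuous[OF d2g] by simp
      have g'l: "(\<lambda>k. g' (xx k)) \<longlonglongrightarrow> g' xb" by (rule isCont_tendsto_compose[OF cg' xx])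
      have "(xs, - l) \<in> dnormal ?G (xb, 0) (u, 0)"
        unfolding dnormal_def
      proof (intro CollectI exI conjI allI)
        show "ts k > 0" for k using tw(1) by simp
        show "ts \<longlonglongrightarrow> 0" by (rule tw(2))
        have "(\<lambda>k. (u, (1 / ts k) *\<^sub>R (g (xx k) - g xb) - ws k)) \<longlonglongrightarrow> (u, ?w - ?w)"
          by (intro tendsto_Pair tendsto_diff gl tw(3) tendsto_const)
        then show "(\<lambda>k. (u, (1 / ts k) *\<^sub>R (g (xx k) - g xb) - ws k)) \<longlonglongrightarrow> (u, 0)" by simp
        show "(\<lambda>k. (adjoint (blinfun_apply (g' (xx k))) (vs k), - vs k)) \<longlonglongrightarrow> (xs, - l)"
          unfolding l(2) by (intro tendsto_Pair tendsto_minus adj_tendsto g'l tw(5))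
        show "(adjoint (blinfun_apply (g' (xx k))) (vs k), - vs k)
              \<in> rnormal ?G ((xb, 0) + ts k *\<^sub>R (u, (1 / ts k) *\<^sub>R (g (xx k) - g xb) - ws k))" for k
        proof -
          have tn: "ts k \<noteq> 0" using tw(1)[rule_format, of k] by simp
          have pt: "(xb, 0) + ts k *\<^sub>R (u, (1 / ts k) *\<^sub>R (g (xx k) - g xb) - ws k)
                  = (xx k, g (xx k) - (g xb + ts k *\<^sub>R ws k))"
            unfolding xx_def using tn by (simp add: scaleR_diff_right algebra_simps)
          show ?thesis unfolding pt
            by (rule D_to_G[OF dg]) (use tw(4) in \<open>simp add: add.commute\<close>)
        qed
      qed
      then show "xs \<in> (\<Union>lam. dcoderiv ?G xb 0 u 0 lam)" unfolding dcoderiv_def by blast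
    qed
  qed
qed

end
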